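(* For $0\le d\le r<\min\{m,n\}$ there is a surjection of $\mathfrak{S}_n\times\mathfrak{S}_m$-modules $R(\mathcal{Z}_{n,m,r})_d\twoheadrightarrow R(\mathcal{Z}_{n,m,r+1})_d$.
   Context: Fix positive integers $n,m$. $\mathbb{C}[\mathbf{x}_{n\times m}]$ is the polynomial ring in variables $x_{i,j}$; $\mathfrak{S}_n\times\mathfrak{S}_m$ acts by $(g,h)\cdot x_{i,j}=x_{g(i),h(j)}$. For finite stable $\mathcal{Z}\subseteq\mathrm{Mat}_{n\times m}(\mathbb{C})$, $R(\mathcal{Z})=\mathbb{C}[\mathbf{x}_{n\times m}]/\mathrm{gr}\,\mathbf{I}(\mathcal{Z})$, where $\mathbf{I}(\mathcal{Z})$ is the vanishing ideal and $\mathrm{gr}\,\mathbf{I}(\mathcal{Z})$ the ideal generated by top-degree homogeneous components of its nonzero elements; $R(\mathcal{Z})_d$ is its degree-$d$ component. $\mathcal{Z}_{n,m,r}$ is the set of $n\times m$ $0/1$ matrices with exactly $r$ ones and at most one $1$ in each row and column. *)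

theory Defs
  imports Complex_Main "HOL-Library.Poly_Mapping" "HOL-Combinatorics.Permutations"
begin

text \<open>Polynomials in the variables x_(i,j) (indexed by pairs of naturals) with
complex coefficients: a monomial is a finitely supported exponent map, a polynomial
a finitely supported coefficient map on monomials.\<close>

type_synonym mono = "(nat \<times> nat) \<Rightarrow>\<^sub>0 nat"
type_synonym mpoly = "mono \<Rightarrow>\<^sub>0 complex"

definition polys :: "nat \<Rightarrow> nat \<Rightarrow> mpoly set" where
  "polys n m = {f. \<forall>M\<in>Poly_Mapping.keys f. \<forall>v\<in>Poly_Mapping.keys M. fst v < n \<and> snd v < m}"

definition tdeg :: "mono \<Rightarrow> nat" where
  "tdeg M = (\<Sum>v\<in>Poly_Mapping.keys M. Poly_Mapping.lookup M v)"

definition homog :: "nat \<Rightarrow> mpoly \<Rightarrow> bool" where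
  "homog d f \<longleftrightarrow> (\<forall>M\<in>Poly_Mapping.keys f. tdeg M = d)"

definition pdeg :: "mpoly \<Rightarrow> nat" where
  "pdeg f = Max (tdeg ` Poly_Mapping.keys f)"

definition top_part :: "mpoly \<Rightarrow> mpoly" where
  "top_part f = Abs_poly_mapping (\<lambda>M. if tdeg M = pdeg f then Poly_Mapping.lookup f M else 0)"

definition eval_at :: "mpoly \<Rightarrow> (nat \<times> nat \<Rightarrow> complex) \<Rightarrow> complex" where
  "eval_at f A = (\<Sum>M\<in>Poly_Mapping.keys f. Poly_Mapping.lookup f M * (\<Prod>v\<in>Poly_Mapping.keys M. A v ^ Poly_Mapping.lookup M v))"

definition vanishing_ideal :: "nat \<Rightarrow> nat \<Rightarrow> (nat \<times> nat \<Rightarrow> complex) set \<Rightarrow> mpoly set" where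
  "vanishing_ideal n m Z = {f \<in> polys n m. \<forall>A\<in>Z. eval_at f A = 0}"

definition ideal_gen :: "mpoly set \<Rightarrow> mpoly set \<Rightarrow> mpoly set" where
  "ideal_gen P G = {f. \<exists>(k::nat) g h. (\<forall>i<k. g i \<in> P \<and> h i \<in> G) \<and> f = (\<Sum>i<k. g i * h i)}"

definition gr_ideal :: "nat \<Rightarrow> nat \<Rightarrow> (nat \<times> nat \<Rightarrow> complex) set \<Rightarrow> mpoly set" where
  "gr_ideal n m Z = ideal_gen (polys n m) (top_part ` (vanishing_ideal n m Z - {0}))"

definition Zset :: "nat \<Rightarrow> nat \<Rightarrow> nat \<Rightarrow> (nat \<times> nat \<Rightarrow> complex) set" where
  "Zset n m r = {A. (\<forall>i j. A (i,j) = 0 \<or> A (i,j) = 1)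
      \<and> (\<forall>i j. A (i,j) \<noteq> 0 \<longrightarrow> i < n \<and> j < m)
      \<and> card {p. A p = 1} = r
      \<and> (\<forall>i j j'. A (i,j) = 1 \<and> A (i,j') = 1 \<longrightarrow> j = j')
      \<and> (\<forall>i i' j. A (i,j) = 1 \<and> A (i',j) = 1 \<longrightarrow> i = i')}"

definition act_mono :: "(nat \<Rightarrow> nat) \<Rightarrow> (nat \<Rightarrow> nat) \<Rightarrow> mono \<Rightarrow> mono" where
  "act_mono g h M = Poly_Mapping.map_key (\<lambda>(i,j). (g i, h j)) M"

definition act :: "(nat \<Rightarrow> nat) \<Rightarrow> (nat \<Rightarrow> nat) \<Rightarrow> mpoly \<Rightarrow> mpoly" where
  "act g h f = Poly_Mapping.map_key (act_mono g h) f"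

text \<open>R(Z)_d is the quotient of the degree-d homogeneous polynomials P_d by
gr I(Z) \<inter> P_d.  A map R(Z1)_d \<rightarrow> R(Z2)_d is represented by a lift
\<phi> : P_d \<rightarrow> P_d; the following predicate says \<phi> induces a well-defined,
C-linear, S_n x S_m-equivariant, surjective map of the quotients.\<close>
definition equiv_surj_quot ::
  "nat \<Rightarrow> nat \<Rightarrow> nat \<Rightarrow> mpoly set \<Rightarrow> mpoly set \<Rightarrow> (mpoly \<Rightarrow> mpoly) \<Rightarrow> bool" where
  "equiv_surj_quot n m d J1 J2 \<phi> \<longleftrightarrow>
     (let Pd = {f \<in> polys n m. homog d f} in
      (\<forall>f\<in>Pd. \<phi> f \<in> Pd)
    \<and> (\<forall>f\<in>Pd. \<forall>g\<in>Pd. f - g \<in> J1 \<longrightarrow> \<phi> f - \<phi> g \<in> J2)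
    \<and> (\<forall>f\<in>Pd. \<forall>g\<in>Pd. \<forall>a b::complex.
          \<phi> (Poly_Mapping.map ((*) a) f + Poly_Mapping.map ((*) b) g)
          - (Poly_Mapping.map ((*) a) (\<phi> f) + Poly_Mapping.map ((*) b) (\<phi> g)) \<in> J2)
    \<and> (\<forall>g h. g permutes {..<n} \<and> h permutes {..<m} \<longrightarrow>
          (\<forall>f\<in>Pd. \<phi> (act g h f) - act g h (\<phi> f) \<in> J2))
    \<and> (\<forall>q\<in>Pd. \<exists>f\<in>Pd. \<phi> f - q \<in> J2))"

end

theory Submission
  imports Defs
begin

lemma polys_subset: "f \<in> polys n m \<Longrightarrow> Poly_Mapping.keys g \<subseteq> Poly_Mapping.keys f \<Longrightarrow> g \<in> polys n m"
  by (auto simp: polys_def)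

lemma polys_add: "f \<in> polys n m \<Longrightarrow> g \<in> polys n m \<Longrightarrow> f + g \<in> polys n m"
  using keys_add[of f g] by (auto simp: polys_def)

lemma polys_diff: "f \<in> polys n m \<Longrightarrow> g \<in> polys n m \<Longrightarrow> f - g \<in> polys n m"
  using keys_diff[of f g] by (auto simp: polys_def)

lemma polys_zero: "0 \<in> polys n m" by (simp add: polys_def)

lemma polys_one: "1 \<in> polys n m" by (simp add: polys_def)

lemma polys_single: "(\<forall>v\<in>Poly_Mapping.keys M. fst v < n \<and> snd v < m) \<Longrightarrow> Poly_Mapping.single M c \<in> polys n m"
  by (simp add: polys_def)

lemma polys_mult: assumes "f \<in> polys n m" "g \<in> polys n m" shows "f * g \<in> polys n m"
  unfolding polys_def
proof (intro CollectI ballI)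
  fix M v assume M: "M \<in> Poly_Mapping.keys (f * g)" and v: "v \<in> Poly_Mapping.keys M"
  from M keys_mult[of f g] obtain a b where ab: "M = a + b" "a \<in> Poly_Mapping.keys f" "b \<in> Poly_Mapping.keys g" by blast
  from v ab(1) keys_add[of a b] have "v \<in> Poly_Mapping.keys a \<or> v \<in> Poly_Mapping.keys b" by blast
  then show "fst v < n \<and> snd v < m" using assms ab by (auto simp: polys_def)
qed

lemma sum_split_nat: "(\<Sum>i<a+(b::nat). f i) = (\<Sum>i<a. f i) + (\<Sum>i<b. f (a + i))"
  by (induction b) (auto simp: add.assoc)

lemma ideal_zero: "(0::mpoly) \<in> ideal_gen P G"
  unfolding ideal_gen_def by (rule CollectI, rule exI[of _ 0]) auto

lemma ideal_add:
  assumes "f \<in> ideal_gen P G" "g \<in> ideal_gen P G" shows "f + g \<in> ideal_gen P G"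
proof -
  from assms(1) obtain k1 g1 h1 where 1: "\<forall>i<(k1::nat). g1 i \<in> P \<and> h1 i \<in> G" "f = (\<Sum>i<k1. g1 i * h1 i)"
    unfolding ideal_gen_def by blast
  from assms(2) obtain k2 g2 h2 where 2: "\<forall>i<(k2::nat). g2 i \<in> P \<and> h2 i \<in> G" "g = (\<Sum>i<k2. g2 i * h2 i)"
    unfolding ideal_gen_def by blast
  define g' where "g' i = (if i < k1 then g1 i else g2 (i - k1))" for i
  define h' where "h' i = (if i < k1 then h1 i else h2 (i - k1))" for i
  have "(\<Sum>i<k1+k2. g' i * h' i) = (\<Sum>i<k1. g' i * h' i) + (\<Sum>i<k2. g' (k1+i) * h' (k1+i))"
    by (rule sum_split_nat)
  also have "\<dots> = f + g" unfolding 1 2 g'_def h'_def by simp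
  finally have "f + g = (\<Sum>i<k1+k2. g' i * h' i)" by simp
  moreover have "\<forall>i<k1+k2. g' i \<in> P \<and> h' i \<in> G" using 1 2 unfolding g'_def h'_def by auto
  ultimately show ?thesis unfolding ideal_gen_def by blast
qed

lemma ideal_mult:
  assumes "\<And>a b. a \<in> P \<Longrightarrow> b \<in> P \<Longrightarrow> a * b \<in> P" "p \<in> P" "f \<in> ideal_gen P G"
  shows "p * f \<in> ideal_gen P G"
proof -
  from assms(3) obtain k g h where 1: "\<forall>i<(k::nat). g i \<in> P \<and> h i \<in> G" "f = (\<Sum>i<k. g i * h i)"
    unfolding ideal_gen_def by blast
  have "p * f = (\<Sum>i<k. (p * g i) * h i)" unfolding 1 by (simp add: sum_distrib_left mult.assoc)
  moreover have "\<forall>i<k. p * g i \<in> P \<and> h i \<in> G" using 1 assms by auto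
  ultimately show ?thesis unfolding ideal_gen_def
    by (intro CollectI exI[of _ k] exI[of _ "\<lambda>i. p * g i"] exI[of _ h]) auto
qed

lemma ideal_base: "1 \<in> P \<Longrightarrow> h \<in> G \<Longrightarrow> h \<in> ideal_gen P G"
  unfolding ideal_gen_def
  by (rule CollectI, rule exI[of _ 1], rule exI[of _ "\<lambda>_. 1"], rule exI[of _ "\<lambda>_. h"]) auto

lemma ideal_sum: "finite A \<Longrightarrow> (\<And>i. i \<in> A \<Longrightarrow> f i \<in> ideal_gen P G) \<Longrightarrow> sum f A \<in> ideal_gen P G"
  by (induction A rule: finite_induct) (auto intro: ideal_add ideal_zero)

lemma J_mult: "p \<in> polys n m \<Longrightarrow> f \<in> gr_ideal n m Z \<Longrightarrow> p * f \<in> gr_ideal n m Z"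
  unfolding gr_ideal_def by (rule ideal_mult) (auto intro: polys_mult)

lemma J_base: "f \<in> vanishing_ideal n m Z \<Longrightarrow> f \<noteq> 0 \<Longrightarrow> top_part f \<in> gr_ideal n m Z"
  unfolding gr_ideal_def by (rule ideal_base) (auto simp: polys_one)

lemma tdeg_superset: "finite K \<Longrightarrow> Poly_Mapping.keys M \<subseteq> K \<Longrightarrow> tdeg M = (\<Sum>v\<in>K. Poly_Mapping.lookup M v)"
  unfolding tdeg_def by (rule sum.mono_neutral_left) (auto simp: in_keys_iff)

lemma tdeg_add: "tdeg (a + b) = tdeg a + tdeg b"
proof -
  let ?K = "Poly_Mapping.keys a \<union> Poly_Mapping.keys b"
  have "tdeg (a + b) = (\<Sum>v\<in>?K. Poly_Mapping.lookup (a + b) v)"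
    by (rule tdeg_superset) (use keys_add[of a b] in auto)
  also have "\<dots> = (\<Sum>v\<in>?K. Poly_Mapping.lookup a v) + (\<Sum>v\<in>?K. Poly_Mapping.lookup b v)"
    by (simp add: lookup_add sum.distrib)
  also have "\<dots> = tdeg a + tdeg b" by (simp add: tdeg_superset[symmetric])
  finally show ?thesis .
qed

lemma tdeg_single: "tdeg (Poly_Mapping.single v k) = k"
  by (simp add: tdeg_def)

lemma card_keys_le_tdeg: "card (Poly_Mapping.keys a) \<le> tdeg a"
proof -
  have "card (Poly_Mapping.keys a) = (\<Sum>v\<in>Poly_Mapping.keys a. 1)" by simp
  also have "\<dots> \<le> (\<Sum>v\<in>Poly_Mapping.keys a. Poly_Mapping.lookup a v)"
    by (rule sum_mono) (auto simp: in_keys_iff)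
  finally show ?thesis by (simp add: tdeg_def)
qed

lemma card_keys_lt_tdeg: assumes "card (Poly_Mapping.keys a) < tdeg a"
  shows "\<exists>v. 2 \<le> Poly_Mapping.lookup a v"
proof (rule ccontr)
  assume nv: "\<not> ?thesis"
  have "\<forall>v\<in>Poly_Mapping.keys a. Poly_Mapping.lookup a v = 1"
  proof (intro ballI)
    fix v assume kv: "v \<in> Poly_Mapping.keys a"
    from kv have "Poly_Mapping.lookup a v \<noteq> 0" by (simp add: in_keys_iff)
    moreover from nv have "\<not> 2 \<le> Poly_Mapping.lookup a v" by blast
    ultimately show "Poly_Mapping.lookup a v = 1" by arith
  qed
  then have "tdeg a = (\<Sum>v\<in>Poly_Mapping.keys a. 1)" unfolding tdeg_def by (intro sum.cong) auto
  with assms show False by simp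
qed

definition proj :: "nat \<Rightarrow> mpoly \<Rightarrow> mpoly" where
  "proj K p = Abs_poly_mapping (\<lambda>\<alpha>. if tdeg \<alpha> = K then Poly_Mapping.lookup p \<alpha> else 0)"

lemma lookup_proj: "Poly_Mapping.lookup (proj K p) \<alpha> = (if tdeg \<alpha> = K then Poly_Mapping.lookup p \<alpha> else 0)"
proof -
  have "finite {\<alpha>. (if tdeg \<alpha> = K then Poly_Mapping.lookup p \<alpha> else 0) \<noteq> 0}"
    by (rule finite_subset[OF _ finite_lookup[of p]]) auto
  then show ?thesis unfolding proj_def by simp
qed

lemma keys_proj: "Poly_Mapping.keys (proj K p) \<subseteq> Poly_Mapping.keys p"
  by (auto simp: in_keys_iff lookup_proj split: if_splits)

lemma homog_proj: "homog K (proj K p)"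
  by (auto simp: homog_def in_keys_iff lookup_proj split: if_splits)

lemma top_part_proj: "top_part f = proj (pdeg f) f"
  by (simp add: top_part_def proj_def)

lemma lookup_top: "Poly_Mapping.lookup (top_part f) \<alpha> = (if tdeg \<alpha> = pdeg f then Poly_Mapping.lookup f \<alpha> else 0)"
  by (simp add: top_part_proj lookup_proj)

lemma homog_top: "homog (pdeg f) (top_part f)"
  by (simp add: top_part_proj homog_proj)

lemma homog_mult: "homog a p \<Longrightarrow> homog b q \<Longrightarrow> homog (a + b) (p * q)"
  unfolding homog_def using keys_mult[of p q] by (force simp: tdeg_add)

lemma homog_sum: "(\<And>i. i \<in> A \<Longrightarrow> homog d (f i)) \<Longrightarrow> homog d (sum f A)"
  unfolding homog_def using keys_sum[of f A] by blast

lemma homog_diff: "homog d f \<Longrightarrow> homog d g \<Longrightarrow> homog d (f - g)"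
  unfolding homog_def using keys_diff[of f g] by blast

lemma homog_zero: "homog d 0" by (simp add: homog_def)

lemma sum_monomials: "(p::mpoly) = (\<Sum>\<alpha>\<in>Poly_Mapping.keys p. Poly_Mapping.single \<alpha> (Poly_Mapping.lookup p \<alpha>))"
proof (rule poly_mapping_eqI)
  fix a
  have "(\<Sum>\<alpha>\<in>Poly_Mapping.keys p. Poly_Mapping.lookup (Poly_Mapping.single \<alpha> (Poly_Mapping.lookup p \<alpha>)) a)
     = (\<Sum>\<alpha>\<in>Poly_Mapping.keys p. if \<alpha> = a then Poly_Mapping.lookup p \<alpha> else 0)"
    by (rule sum.cong) (auto simp: lookup_single)
  also have "\<dots> = Poly_Mapping.lookup p a" by (auto simp: in_keys_iff)
  finally show "Poly_Mapping.lookup p a = Poly_Mapping.lookup (\<Sum>\<alpha>\<in>Poly_Mapping.keys p. Poly_Mapping.single \<alpha> (Poly_Mapping.lookup p \<alpha>)) a"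
    by (simp add: lookup_sum)
qed

lemma lookup_single0_mult: "Poly_Mapping.lookup (Poly_Mapping.single 0 c * (p::mpoly)) a = c * Poly_Mapping.lookup p a"
proof -
  have "Poly_Mapping.lookup (Poly_Mapping.single 0 c * p) a = (\<Sum>aa. (if aa = 0 then c else 0) * (\<Sum>ab. if a = aa + ab then Poly_Mapping.lookup p ab else 0))"
    by (simp add: lookup_mult lookup_single when_def)
  also have "\<dots> = (\<Sum>aa. if aa = 0 then c * (\<Sum>ab. if a = aa + ab then Poly_Mapping.lookup p ab else 0) else 0)"
    by (rule arg_cong[where f=Sum_any]) (simp add: fun_eq_iff)
  also have "\<dots> = c * Poly_Mapping.lookup p a" by simp
  finally show ?thesis .
qed

section \<open>Evaluation at 0/1 matrices\<close>

lemma eval01: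
  assumes K: "finite K" "Poly_Mapping.keys f \<subseteq> K" and B: "\<forall>p. B p = 0 \<or> B p = 1"
  shows "eval_at f B = (\<Sum>\<alpha>\<in>K. Poly_Mapping.lookup f \<alpha> * (if Poly_Mapping.keys \<alpha> \<subseteq> {p. B p = 1} then 1 else 0))"
proof -
  have pr: "(\<Prod>v\<in>Poly_Mapping.keys \<alpha>. B v ^ Poly_Mapping.lookup \<alpha> v) = (if Poly_Mapping.keys \<alpha> \<subseteq> {p. B p = 1} then 1 else 0)" for \<alpha>
  proof (cases "Poly_Mapping.keys \<alpha> \<subseteq> {p. B p = 1}")
    case True then show ?thesis by (auto intro!: prod.neutral)
  next
    case False
    then obtain w where w: "w \<in> Poly_Mapping.keys \<alpha>" "B w \<noteq> 1" by auto
    moreover from B have "B w = 0 \<or> B w = 1" by blast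
    ultimately have "B w = 0" by blast
    with w have "B w ^ Poly_Mapping.lookup \<alpha> w = 0" by (simp add: in_keys_iff)
    with w False show ?thesis by (auto intro: prod_zero[OF finite_keys])
  qed
  have "eval_at f B = (\<Sum>\<alpha>\<in>Poly_Mapping.keys f. Poly_Mapping.lookup f \<alpha> * (if Poly_Mapping.keys \<alpha> \<subseteq> {p. B p = 1} then 1 else 0))"
    unfolding eval_at_def pr ..
  also have "\<dots> = (\<Sum>\<alpha>\<in>K. Poly_Mapping.lookup f \<alpha> * (if Poly_Mapping.keys \<alpha> \<subseteq> {p. B p = 1} then 1 else 0))"
    by (rule sum.mono_neutral_left) (use K in \<open>auto simp: in_keys_iff\<close>)
  finally show ?thesis .
qed


definition Tm :: "nat \<Rightarrow> mpoly \<Rightarrow> mpoly" where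
  "Tm r f = Abs_poly_mapping (\<lambda>\<alpha>. (of_nat (Suc r) - of_nat (card (Poly_Mapping.keys \<alpha>))) * Poly_Mapping.lookup f \<alpha>)"

lemma lookup_Tm: "Poly_Mapping.lookup (Tm r f) \<alpha> = (of_nat (Suc r) - of_nat (card (Poly_Mapping.keys \<alpha>))) * Poly_Mapping.lookup f \<alpha>"
proof -
  have "finite {\<alpha>. (of_nat (Suc r) - of_nat (card (Poly_Mapping.keys \<alpha>))) * Poly_Mapping.lookup f \<alpha> \<noteq> (0::complex)}"
    by (rule finite_subset[OF _ finite_lookup[of f]]) auto
  then show ?thesis unfolding Tm_def by simp
qed

lemma keys_Tm: "Poly_Mapping.keys (Tm r f) \<subseteq> Poly_Mapping.keys f"
  by (auto simp: in_keys_iff lookup_Tm)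

lemma Zset_D:
  assumes "A \<in> Zset n m r"
  shows "(\<forall>i j. A (i,j) = 0 \<or> A (i,j) = 1)
      \<and> (\<forall>i j. A (i,j) \<noteq> 0 \<longrightarrow> i < n \<and> j < m)
      \<and> card {p. A p = 1} = r
      \<and> (\<forall>i j j'. A (i,j) = 1 \<and> A (i,j') = 1 \<longrightarrow> j = j')
      \<and> (\<forall>i i' j. A (i,j) = 1 \<and> A (i',j) = 1 \<longrightarrow> i = i')"
  using assms unfolding Zset_def by (rule CollectD)

lemma Zset_facts:
  assumes "A \<in> Zset n m r"
  shows "finite {p. A p = 1}" "card {p. A p = 1} = r" "\<forall>p. A p = 0 \<or> A p = 1"
proof -
  note D = Zset_D[OF assms]
  have c1: "\<forall>i j. A (i,j) = 0 \<or> A (i,j) = 1" using D by (rule conjunct1)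
  have c2: "\<forall>i j. A (i,j) \<noteq> 0 \<longrightarrow> i < n \<and> j < m" using D by blast
  show "card {p. A p = 1} = r" using D by blast
  have "{p. A p = 1} \<subseteq> {..<n} \<times> {..<m}"
  proof
    fix p assume p: "p \<in> {p. A p = 1}"
    obtain i j where pij: "p = (i,j)" by (cases p)
    have "A (i,j) \<noteq> 0" using p pij by simp
    then have "i < n \<and> j < m" using c2 by blast
    then show "p \<in> {..<n} \<times> {..<m}" using pij by simp
  qed
  then show "finite {p. A p = 1}" by (rule finite_subset) auto
  show "\<forall>p. A p = 0 \<or> A p = 1"
  proof
    fix p :: "nat \<times> nat"
    obtain i j where pij: "p = (i,j)" by (cases p)
    show "A p = 0 \<or> A p = 1" unfolding pij using c1 by blast
  qed
qed

lemma Zset_remove: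
  assumes A: "A \<in> Zset n m (Suc r)" and v: "A v = 1"
  shows "A(v:=0) \<in> Zset n m r"
proof -
  have S: "{p. (A(v:=0)) p = 1} = {p. A p = 1} - {v}" by auto
  have "card {p. (A(v:=0)) p = 1} = r"
    unfolding S using Zset_facts[OF A] v by (simp add: card_Diff_singleton)
  have c1: "\<forall>i j. A (i,j) = 0 \<or> A (i,j) = 1" and c2: "\<forall>i j. A (i,j) \<noteq> 0 \<longrightarrow> i < n \<and> j < m"
    and c4: "\<forall>i j j'. A (i,j) = 1 \<and> A (i,j') = 1 \<longrightarrow> j = j'"
    and c5: "\<forall>i i' j. A (i,j) = 1 \<and> A (i',j) = 1 \<longrightarrow> i = i'"
    using Zset_D[OF A] by blast+
  let ?B = "A(v:=0)"
  have d1: "\<forall>i j. ?B (i,j) = 0 \<or> ?B (i,j) = 1" using c1 by simp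
  have d2: "\<forall>i j. ?B (i,j) \<noteq> 0 \<longrightarrow> i < n \<and> j < m" using c2 by simp
  have d4: "\<forall>i j j'. ?B (i,j) = 1 \<and> ?B (i,j') = 1 \<longrightarrow> j = j'"
  proof (intro allI impI)
    fix i j j' assume "?B (i,j) = 1 \<and> ?B (i,j') = 1"
    then have "A (i,j) = 1 \<and> A (i,j') = 1" by (auto split: if_splits)
    then show "j = j'" using c4 by blast
  qed
  have d5: "\<forall>i i' j. ?B (i,j) = 1 \<and> ?B (i',j) = 1 \<longrightarrow> i = i'"
  proof (intro allI impI)
    fix i i' j assume "?B (i,j) = 1 \<and> ?B (i',j) = 1"
    then have "A (i,j) = 1 \<and> A (i',j) = 1" by (auto split: if_splits)
    then show "i = i'" using c5 by blast
  qed
  show ?thesis unfolding Zset_def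
    by (rule CollectI) (intro conjI d1 d2 d4 d5 \<open>card {p. (A(v:=0)) p = 1} = r\<close>)
qed

lemma count_sum:
  assumes S: "finite S" and K: "finite K"
  shows "(\<Sum>v\<in>S. (if K \<subseteq> S - {v} then 1 else 0 :: complex))
       = (if K \<subseteq> S then of_nat (card S) - of_nat (card K) else 0)"
proof (cases "K \<subseteq> S")
  case True
  have "(\<Sum>v\<in>S. (if K \<subseteq> S - {v} then 1 else 0 :: complex)) = (\<Sum>v\<in>S. (if v \<notin> K then 1 else 0))"
    by (rule sum.cong) (use True in auto)
  also have "\<dots> = of_nat (card (S - K))"
  proof -
    have eqS: "S \<inter> {v. v \<notin> K} = S - K" by auto
    show ?thesis using S by (simp add: sum.If_cases eqS)
  qed
  also have "\<dots> = of_nat (card S) - of_nat (card K)"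
    using True K S by (simp add: card_Diff_subset of_nat_diff card_mono)
  finally show ?thesis using True by simp
next
  case False
  then show ?thesis by (auto intro!: sum.neutral)
qed

lemma Tm_vanish:
  assumes f: "f \<in> vanishing_ideal n m (Zset n m r)" and A: "A \<in> Zset n m (Suc r)"
  shows "eval_at (Tm r f) A = 0"
proof -
  define S where "S = {p. A p = 1}"
  have Sf: "finite S" and Sc: "card S = Suc r" and A01: "\<forall>p. A p = 0 \<or> A p = 1"
    using Zset_facts[OF A] by (auto simp: S_def)
  let ?ind = "\<lambda>(\<alpha>::mono) T. (if Poly_Mapping.keys \<alpha> \<subseteq> T then 1 else 0 :: complex)"
  have e1: "eval_at (Tm r f) A = (\<Sum>\<alpha>\<in>Poly_Mapping.keys f. Poly_Mapping.lookup (Tm r f) \<alpha> * ?ind \<alpha> S)"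
    unfolding S_def by (rule eval01) (use keys_Tm A01 in auto)
  have e2: "eval_at f (A(v:=0)) = (\<Sum>\<alpha>\<in>Poly_Mapping.keys f. Poly_Mapping.lookup f \<alpha> * ?ind \<alpha> (S - {v}))" for v
  proof -
    have "{p. (A(v:=0)) p = 1} = S - {v}" by (auto simp: S_def)
    moreover have "\<forall>p. (A(v:=0)) p = 0 \<or> (A(v:=0)) p = 1" using A01 by auto
    ultimately show ?thesis using eval01[of "Poly_Mapping.keys f" f "A(v:=0)"] by simp
  qed
  have z: "eval_at f (A(v:=0)) = 0" if "v \<in> S" for v
    using f Zset_remove[OF A] that unfolding vanishing_ideal_def S_def by auto
  have "0 = (\<Sum>v\<in>S. eval_at f (A(v:=0)))" using z by simp
  also have "\<dots> = (\<Sum>v\<in>S. \<Sum>\<alpha>\<in>Poly_Mapping.keys f. Poly_Mapping.lookup f \<alpha> * ?ind \<alpha> (S - {v}))"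
    using e2 by simp
  also have "\<dots> = (\<Sum>\<alpha>\<in>Poly_Mapping.keys f. Poly_Mapping.lookup f \<alpha> * (\<Sum>v\<in>S. ?ind \<alpha> (S - {v})))"
    by (subst sum.swap) (simp add: sum_distrib_left)
  also have "\<dots> = (\<Sum>\<alpha>\<in>Poly_Mapping.keys f. Poly_Mapping.lookup (Tm r f) \<alpha> * ?ind \<alpha> S)"
  proof (rule sum.cong[OF refl])
    fix \<alpha>
    have "(\<Sum>v\<in>S. ?ind \<alpha> (S - {v})) = (if Poly_Mapping.keys \<alpha> \<subseteq> S then of_nat (card S) - of_nat (card (Poly_Mapping.keys \<alpha>)) else 0)"
      by (rule count_sum[OF Sf finite_keys])
    then show "Poly_Mapping.lookup f \<alpha> * (\<Sum>v\<in>S. ?ind \<alpha> (S - {v})) = Poly_Mapping.lookup (Tm r f) \<alpha> * ?ind \<alpha> S"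
      by (simp add: lookup_Tm Sc)
  qed
  finally show ?thesis using e1 by simp
qed

lemma nonsq:
  assumes ij: "fst v < n" "snd v < m" and two: "2 \<le> Poly_Mapping.lookup \<alpha> v"
    and rng: "\<forall>w\<in>Poly_Mapping.keys \<alpha>. fst w < n \<and> snd w < m"
  shows "Poly_Mapping.single \<alpha> c \<in> gr_ideal n m (Zset n m r')"
proof -
  define \<beta> where "\<beta> = \<alpha> - Poly_Mapping.single v 2"
  have ab: "\<alpha> = \<beta> + Poly_Mapping.single v 2"
    by (rule poly_mapping_eqI) (use two in \<open>auto simp: \<beta>_def lookup_add lookup_minus lookup_single when_def\<close>)
  have kb: "Poly_Mapping.keys \<beta> \<subseteq> Poly_Mapping.keys \<alpha>"
    by (auto simp: \<beta>_def in_keys_iff lookup_minus)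
  define s2 :: mono where "s2 = Poly_Mapping.single v 2"
  define s1 :: mono where "s1 = Poly_Mapping.single v 1"
  have s12: "s2 \<noteq> s1"
  proof
    assume "s2 = s1"
    then have "Poly_Mapping.lookup s2 v = Poly_Mapping.lookup s1 v" by simp
    then show False by (simp add: s2_def s1_def)
  qed
  define q :: mpoly where "q = Poly_Mapping.single s2 1 - Poly_Mapping.single s1 1"
  have lq: "Poly_Mapping.lookup q a = (if a = s2 then 1 else if a = s1 then -1 else 0)" for a
    using s12 by (auto simp: q_def lookup_minus lookup_single)
  have kq: "Poly_Mapping.keys q = {s2, s1}"
    by (auto simp: in_keys_iff lq s12 split: if_splits)
  have pq: "pdeg q = 2"
    unfolding pdeg_def kq by (simp add: s2_def s1_def tdeg_single)
  have tq: "top_part q = Poly_Mapping.single s2 1"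
  proof (rule poly_mapping_eqI)
    fix a
    show "Poly_Mapping.lookup (top_part q) a = Poly_Mapping.lookup (Poly_Mapping.single s2 1) a"
      using s12 by (auto simp: lookup_top pq lq lookup_single s1_def s2_def tdeg_single)
  qed
  have kv: "Poly_Mapping.keys s2 = {v}" "Poly_Mapping.keys s1 = {v}" by (auto simp: s2_def s1_def)
  have qP: "q \<in> polys n m" unfolding polys_def using kq kv ij by auto
  have qV: "q \<in> vanishing_ideal n m (Zset n m r')"
    unfolding vanishing_ideal_def
  proof (intro CollectI conjI qP ballI)
    fix A assume A: "A \<in> Zset n m r'"
    have "eval_at q A = (\<Sum>\<alpha>\<in>{s2, s1}. Poly_Mapping.lookup q \<alpha> * (if Poly_Mapping.keys \<alpha> \<subseteq> {p. A p = 1} then 1 else 0))"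
      by (rule eval01) (use kq Zset_facts(3)[OF A] in auto)
    then show "eval_at q A = 0" using s12 kv by (simp add: lq)
  qed
  have q0: "q \<noteq> 0" using kq by auto
  have "top_part q \<in> gr_ideal n m (Zset n m r')" by (rule J_base[OF qV q0])
  then have "Poly_Mapping.single \<beta> c * top_part q \<in> gr_ideal n m (Zset n m r')"
    by (rule J_mult[rotated]) (rule polys_single, use kb rng in auto)
  moreover have "Poly_Mapping.single \<beta> c * top_part q = Poly_Mapping.single \<alpha> c"
    by (simp add: tq mult_single ab s2_def)
  ultimately show ?thesis by simp
qed


lemma single0_scal: "Poly_Mapping.single (0::mono) (a::complex) * (Poly_Mapping.single 0 b * p) = Poly_Mapping.single 0 (a * b) * p"
  by (simp add: mult.assoc[symmetric] mult_single)

lemma single0_one: "Poly_Mapping.single (0::mono) (1::complex) = 1"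
  by (rule poly_mapping_eqI) (simp add: lookup_single lookup_one when_def)

lemma key:
  assumes fV: "f \<in> vanishing_ideal n m (Zset n m r)" and f0: "f \<noteq> 0" and pd: "pdeg f \<le> r"
  shows "top_part f \<in> gr_ideal n m (Zset n m (Suc r))"
proof -
  let ?J = "gr_ideal n m (Zset n m (Suc r))"
  have fP: "f \<in> polys n m" using fV by (simp add: vanishing_ideal_def)
  have tle: "tdeg \<alpha> \<le> pdeg f" if "\<alpha> \<in> Poly_Mapping.keys f" for \<alpha>
    unfolding pdeg_def using that by (intro Max_ge) auto
  have fac: "(of_nat (Suc r) - of_nat (card (Poly_Mapping.keys \<alpha>)) :: complex) \<noteq> 0" if "\<alpha> \<in> Poly_Mapping.keys f" for \<alpha>
  proof -
    have "card (Poly_Mapping.keys \<alpha>) \<le> r" using tle[OF that] card_keys_le_tdeg[of \<alpha>] pd by linarith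
    then have "card (Poly_Mapping.keys \<alpha>) \<noteq> Suc r" by simp
    then show ?thesis by (metis eq_iff_diff_eq_0 of_nat_eq_iff)
  qed
  have kT: "Poly_Mapping.keys (Tm r f) = Poly_Mapping.keys f"
    using fac by (auto simp: in_keys_iff lookup_Tm)
  have pT: "pdeg (Tm r f) = pdeg f" unfolding pdeg_def kT ..
  have T0: "Tm r f \<noteq> 0" using kT f0 by (metis keys_eq_empty)
  have TV: "Tm r f \<in> vanishing_ideal n m (Zset n m (Suc r))"
    unfolding vanishing_ideal_def using polys_subset[OF fP keys_Tm] Tm_vanish[OF fV] by auto
  have topT: "top_part (Tm r f) \<in> ?J" by (rule J_base[OF TV T0])
  define e where "e = pdeg f"
  define c :: complex where "c = of_nat (Suc r) - of_nat e"
  have c0: "c \<noteq> 0" unfolding c_def e_def using pd by (metis eq_iff_diff_eq_0 of_nat_eq_iff Suc_n_not_le_n)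
  define D where "D = Poly_Mapping.single 0 c * top_part f - top_part (Tm r f)"
  have lD: "Poly_Mapping.lookup D \<alpha> = (if tdeg \<alpha> = e then (of_nat (card (Poly_Mapping.keys \<alpha>)) - of_nat e) * Poly_Mapping.lookup f \<alpha> else 0)" for \<alpha>
    unfolding D_def lookup_minus lookup_single0_mult lookup_top pT lookup_Tm
    by (simp add: c_def e_def algebra_simps)
  have DJ: "D \<in> ?J"
  proof -
    have "(\<Sum>\<alpha>\<in>Poly_Mapping.keys D. Poly_Mapping.single \<alpha> (Poly_Mapping.lookup D \<alpha>)) \<in> ?J"
    proof (rule ideal_sum[where G = "top_part ` (vanishing_ideal n m (Zset n m (Suc r)) - {0})" and P = "polys n m", folded gr_ideal_def])
      show "finite (Poly_Mapping.keys D)" by simp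
    next
      fix \<alpha> assume a: "\<alpha> \<in> Poly_Mapping.keys D"
      then have ne: "Poly_Mapping.lookup D \<alpha> \<noteq> 0" by (simp add: in_keys_iff)
      then have te: "tdeg \<alpha> = e" and ce: "card (Poly_Mapping.keys \<alpha>) \<noteq> e" and af: "\<alpha> \<in> Poly_Mapping.keys f"
        by (auto simp: lD in_keys_iff split: if_splits)
      have "card (Poly_Mapping.keys \<alpha>) < tdeg \<alpha>" using card_keys_le_tdeg[of \<alpha>] te ce by linarith
      then obtain v where v: "2 \<le> Poly_Mapping.lookup \<alpha> v" using card_keys_lt_tdeg by blast
      have rng: "\<forall>w\<in>Poly_Mapping.keys \<alpha>. fst w < n \<and> snd w < m" using fP af by (auto simp: polys_def)
      have "v \<in> Poly_Mapping.keys \<alpha>" using v by (auto simp: in_keys_iff)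
      then have "fst v < n" "snd v < m" using rng by auto
      then show "Poly_Mapping.single \<alpha> (Poly_Mapping.lookup D \<alpha>) \<in> ?J"
        by (rule nonsq[OF _ _ v rng])
    qed
    then show ?thesis using sum_monomials[of D] by simp
  qed
  have "Poly_Mapping.single 0 c * top_part f = D + top_part (Tm r f)" by (simp add: D_def)
  also have "\<dots> \<in> ?J" using DJ topT unfolding gr_ideal_def by (rule ideal_add)
  finally have cJ: "Poly_Mapping.single 0 c * top_part f \<in> ?J" .
  have "Poly_Mapping.single 0 (1/c) * (Poly_Mapping.single 0 c * top_part f) \<in> ?J"
    by (rule J_mult[OF polys_single cJ]) simp
  then show ?thesis using c0 by (simp add: single0_scal single0_one)
qed

lemma main_incl:
  assumes FJ: "F \<in> gr_ideal n m (Zset n m r)" and FP: "F \<in> polys n m" and Fh: "homog d F" and dr: "d \<le> r"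
  shows "F \<in> gr_ideal n m (Zset n m (Suc r))"
proof -
  let ?J = "gr_ideal n m (Zset n m (Suc r))"
  from FJ obtain k g h where kgh: "\<forall>i<(k::nat). g i \<in> polys n m \<and> h i \<in> top_part ` (vanishing_ideal n m (Zset n m r) - {0})"
      and Fs: "F = (\<Sum>i<k. g i * h i)"
    unfolding gr_ideal_def ideal_gen_def by blast
  have "\<forall>i. \<exists>ff. i < k \<longrightarrow> h i = top_part ff \<and> ff \<in> vanishing_ideal n m (Zset n m r) \<and> ff \<noteq> 0"
    using kgh by blast
  then obtain ff where ff: "\<And>i. i < k \<Longrightarrow> h i = top_part (ff i) \<and> ff i \<in> vanishing_ideal n m (Zset n m r) \<and> ff i \<noteq> 0"
    by metis
  define e where "e i = pdeg (ff i)" for i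
  have hh: "homog (e i) (h i)" if "i < k" for i using ff[OF that] homog_top by (simp add: e_def)
  define p where "p i = (if e i \<le> d then proj (d - e i) (g i) else 0)" for i
  define S1 where "S1 = (\<Sum>i<k. p i * h i)"
  define S2 where "S2 = (\<Sum>i<k. (g i - p i) * h i)"
  have FS: "F = S1 + S2" unfolding Fs S1_def S2_def by (simp add: sum.distrib[symmetric] algebra_simps)
  have S1J: "S1 \<in> ?J" unfolding S1_def
  proof (rule ideal_sum[where G = "top_part ` (vanishing_ideal n m (Zset n m (Suc r)) - {0})" and P = "polys n m", folded gr_ideal_def])
    fix i assume "i \<in> {..<k}"
    then have i: "i < k" by simp
    show "p i * h i \<in> ?J"
    proof (cases "e i \<le> d")
      case True
      have "h i \<in> ?J" using ff[OF i] key[of "ff i" n m r] True dr by (simp add: e_def)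
      moreover have "p i \<in> polys n m" using True kgh i polys_subset keys_proj by (simp add: p_def) blast
      ultimately show ?thesis by (simp add: J_mult)
    next
      case False then show ?thesis by (simp add: p_def gr_ideal_def ideal_zero)
    qed
  qed simp
  have S1h: "homog d S1" unfolding S1_def
  proof (rule homog_sum)
    fix i assume "i \<in> {..<k}"
    then have i: "i < k" by simp
    show "homog d (p i * h i)"
    proof (cases "e i \<le> d")
      case True
      have "homog (d - e i + e i) (p i * h i)" using homog_mult[OF homog_proj[of "d - e i" "g i"] hh[OF i]] True by (simp add: p_def)
      then show ?thesis using True by simp
    next
      case False then show ?thesis by (simp add: p_def homog_zero)
    qed
  qed
  have S2k: "tdeg \<alpha> \<noteq> d" if "\<alpha> \<in> Poly_Mapping.keys S2" for \<alpha>
  proof -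
    from that keys_sum[of "\<lambda>i. (g i - p i) * h i" "{..<k}"] obtain i where i: "i < k"
      and a: "\<alpha> \<in> Poly_Mapping.keys ((g i - p i) * h i)" unfolding S2_def by auto
    from a keys_mult obtain a b where ab: "\<alpha> = a + b" "a \<in> Poly_Mapping.keys (g i - p i)" "b \<in> Poly_Mapping.keys (h i)"
      by blast
    have tb: "tdeg b = e i" using hh[OF i] ab(3) by (simp add: homog_def)
    show ?thesis
    proof (cases "e i \<le> d")
      case True
      have "Poly_Mapping.lookup (g i - p i) a \<noteq> 0" using ab(2) by (simp add: in_keys_iff)
      then have "tdeg a \<noteq> d - e i" using True by (auto simp: p_def lookup_minus lookup_proj)
      then show ?thesis using ab(1) tb True by (simp add: tdeg_add)
    next
      case False then show ?thesis using ab(1) tb by (simp add: tdeg_add)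
    qed
  qed
  have "homog d S2" using homog_diff[OF Fh S1h] FS by (simp add: algebra_simps)
  then have "Poly_Mapping.keys S2 = {}" using S2k by (auto simp: homog_def)
  then have "S2 = 0" by simp
  then show ?thesis using FS S1J by simp
qed

theorem mainTheorem10:
  fixes n m r d :: nat
  assumes "0 < n" and "0 < m"
    and "d \<le> r" and "r < min m n"
  shows "\<exists>\<phi>. equiv_surj_quot n m d (gr_ideal n m (Zset n m r))
                                   (gr_ideal n m (Zset n m (Suc r))) \<phi>"
proof (rule exI[of _ "\<lambda>f. f"])
  have z: "0 \<in> gr_ideal n m (Zset n m (Suc r))" by (simp add: gr_ideal_def ideal_zero)
  show "equiv_surj_quot n m d (gr_ideal n m (Zset n m r)) (gr_ideal n m (Zset n m (Suc r))) (\<lambda>f. f)"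
    unfolding equiv_surj_quot_def Let_def
  proof (intro conjI ballI allI impI)
    fix f g assume f: "f \<in> {f \<in> polys n m. homog d f}" and g: "g \<in> {f \<in> polys n m. homog d f}"
      and fg: "f - g \<in> gr_ideal n m (Zset n m r)"
    show "f - g \<in> gr_ideal n m (Zset n m (Suc r))"
      using f g by (intro main_incl[OF fg _ _ assms(3)]) (auto intro: polys_diff homog_diff)
  qed (use z in auto)
qed

end
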